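(* Let $q\in\mathbb{C}$ and $K(u,v)=u^2+v^2-(q-2)uv-1$. There exists a non-constant polynomial $J(u)\in\mathbb{C}[u]$ such that $K(u,v)$ divides $J(u)-J(v)$ in $\mathbb{C}[u,v]$ if and only if $q=2+2\cos\frac{2k\pi}{m}$ for some integers $k,m$ with $0<2k<m$. Moreover, if this holds with $k$ and $m$ relatively prime, then $J(u)=T_m\big(u\sin\frac{2k\pi}{m}\big)$ is such a polynomial, and it has minimal degree (namely $m$) among all such non-constant polynomials.
   Context: $T_m$ denotes the $m$-th Chebyshev polynomial of the first kind, defined by $T_m(\cos\phi)=\cos(m\phi)$; equivalently $T_0=1$, $T_1(x)=x$, $T_m(x)=2xT_{m-1}(x)-T_{m-2}(x)$ for $m\ge2$. *)

theory Defs
  imports "HOL-Computational_Algebra.Polynomial" Complex_Main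
begin

text \<open>Bivariate polynomials C[u,v] are represented as complex poly poly = (C[u])[v]:
  the outer variable is v, the coefficients are polynomials in u.\<close>

fun cheb :: "nat \<Rightarrow> complex poly" where
  "cheb 0 = 1"
| "cheb (Suc 0) = [:0, 1:]"
| "cheb (Suc (Suc n)) = [:0, 2:] * cheb (Suc n) - cheb n"

definition Kpoly :: "complex \<Rightarrow> complex poly poly" where
  "Kpoly q = [: [:-1, 0, 1:], [:0, -(q - 2):], 1 :]"

definition Jdiff :: "complex poly \<Rightarrow> complex poly poly" where
  "Jdiff J = [:J:] - map_poly (\<lambda>c. [:c:]) J"

end

theory Submission
  imports Defs
begin


definition eval2 :: "complex poly poly \<Rightarrow> complex \<Rightarrow> complex \<Rightarrow> complex" where
  "eval2 P u v = poly (poly P [:v:]) u"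

lemma eval2_mult: "eval2 (P*Q) u v = eval2 P u v * eval2 Q u v"
  by (simp add: eval2_def)
lemma eval2_add: "eval2 (P+Q) u v = eval2 P u v + eval2 Q u v"
  by (simp add: eval2_def)
lemma eval2_diff: "eval2 (P-Q) u v = eval2 P u v - eval2 Q u v"
  by (simp add: eval2_def)

lemma eval2_K: "eval2 (Kpoly q) u v = u^2 + v^2 - (q-2)*u*v - 1"
  by (simp add: eval2_def Kpoly_def algebra_simps power2_eq_square)

lemma poly_map_const: "poly (map_poly (\<lambda>c. [:c:]) p) [:x:] = [:poly p x:]"
  by (induction p) (auto simp: map_poly_pCons mult.commute)

lemma eval2_Jdiff: "eval2 (Jdiff J) u v = poly J u - poly J v"
  by (simp add: eval2_def Jdiff_def poly_map_const)

lemma dvd_vanish: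
  assumes "Kpoly q dvd P" "u^2 + v^2 - (q-2)*u*v - 1 = 0"
  shows "eval2 P u v = 0"
proof -
  from assms(1) obtain Q where "P = Kpoly q * Q" by (auto elim: dvdE)
  then show ?thesis using assms(2) by (simp add: eval2_mult eval2_K)
qed

lemma two_roots:
  fixes q u r :: complex
  assumes r: "r^2 = (q-2)^2*u^2 - 4*(u^2-1)"
  defines "v1 \<equiv> ((q-2)*u + r)/2" and "v2 \<equiv> ((q-2)*u - r)/2"
  shows "u^2 + v1^2 - (q-2)*u*v1 - 1 = 0" "u^2 + v2^2 - (q-2)*u*v2 - 1 = 0"
    "v1 - v2 = r"
proof -
  have "4*(u^2 + v1^2 - (q-2)*u*v1 - 1) = r^2 - ((q-2)^2*u^2 - 4*(u^2-1))"
    unfolding v1_def by (simp add: field_simps power2_eq_square; simp add: algebra_simps)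
  then have "4*(u^2 + v1^2 - (q-2)*u*v1 - 1) = 0" using r by simp
  then show "u^2 + v1^2 - (q-2)*u*v1 - 1 = 0" by (metis mult_eq_0_iff zero_neq_numeral)
  have "4*(u^2 + v2^2 - (q-2)*u*v2 - 1) = r^2 - ((q-2)^2*u^2 - 4*(u^2-1))"
    unfolding v2_def by (simp add: field_simps power2_eq_square; simp add: algebra_simps)
  then have "4*(u^2 + v2^2 - (q-2)*u*v2 - 1) = 0" using r by simp
  then show "u^2 + v2^2 - (q-2)*u*v2 - 1 = 0" by (metis mult_eq_0_iff zero_neq_numeral)
  show "v1 - v2 = r" unfolding v1_def v2_def by (simp add: field_simps)
qed

lemma vanish_dvd:
  assumes van: "\<And>u v. u^2 + v^2 - (q-2)*u*v - 1 = 0 \<Longrightarrow> eval2 P u v = 0"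
  shows "Kpoly q dvd P"
proof -
  obtain Q R where qr: "pseudo_divmod P (Kpoly q) = (Q,R)" by (metis prod.exhaust)
  have K0: "Kpoly q \<noteq> 0" and dK: "degree (Kpoly q) = 2" and lK: "coeff (Kpoly q) 2 = 1"
    by (auto simp: Kpoly_def numeral_2_eq_2)
  from pseudo_divmod[OF K0 qr] dK lK
  have PQR: "P = Kpoly q * Q + R" and dR: "R = 0 \<or> degree R < 2" by auto
  have Rform: "R = [:coeff R 0, coeff R 1:]"
  proof (rule poly_eqI)
    fix n show "coeff R n = coeff [:coeff R 0, coeff R 1:] n"
    proof (cases n)
      case (Suc m) then show ?thesis using dR
        by (cases m) (auto simp: coeff_eq_0 coeff_pCons)
    qed simp
  qed
  define r0 where "r0 = coeff R 0"
  define r1 where "r1 = coeff R 1"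
  have evR: "eval2 R u v = poly r0 u + v * poly r1 u" for u v
    by (subst Rform) (simp add: eval2_def r0_def r1_def)
  have vanR: "poly r0 u + v * poly r1 u = 0" if "u^2 + v^2 - (q-2)*u*v - 1 = 0" for u v
  proof -
    have "eval2 R u v = eval2 P u v - eval2 (Kpoly q) u v * eval2 Q u v"
      using PQR by (simp add: eval2_add eval2_mult)
    also have "\<dots> = 0" using van[OF that] that by (simp add: eval2_K)
    finally show ?thesis by (simp add: evR)
  qed
  define Dp where "Dp = [:4, 0, (q-2)^2 - 4:]"
  have Dp0: "Dp \<noteq> 0" by (simp add: Dp_def)
  have polyDp: "poly Dp u = (q-2)^2*u^2 - 4*(u^2-1)" for u
    by (simp add: Dp_def algebra_simps power2_eq_square)
  have both: "poly r1 u = 0 \<and> poly r0 u = 0" if "poly Dp u \<noteq> 0" for u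
  proof -
    define D where "D = (q-2)^2*u^2 - 4*(u^2-1)"
    have D0: "csqrt D \<noteq> 0" using that by (simp add: polyDp D_def)
    define v1 where "v1 = ((q-2)*u + csqrt D)/2"
    define v2 where "v2 = ((q-2)*u - csqrt D)/2"
    have e1: "poly r0 u + v1 * poly r1 u = 0" unfolding v1_def by (rule vanR, rule two_roots(1)) (simp add: D_def)
    have e2: "poly r0 u + v2 * poly r1 u = 0" unfolding v2_def by (rule vanR, rule two_roots(2)) (simp add: D_def)
    have "(v1 - v2) * poly r1 u = (poly r0 u + v1 * poly r1 u) - (poly r0 u + v2 * poly r1 u)"
      by (simp add: algebra_simps)
    then have "(v1 - v2) * poly r1 u = 0" using e1 e2 by simp
    moreover have "v1 - v2 \<noteq> 0" using D0 unfolding v1_def v2_def by simp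
    ultimately have "poly r1 u = 0" by simp
    with e1 show ?thesis by simp
  qed
  have fin: "finite {u. poly Dp u = 0}" using poly_roots_finite[OF Dp0] .
  have zero: "r = 0" if "\<And>u. poly Dp u \<noteq> 0 \<Longrightarrow> poly r u = 0" for r :: "complex poly"
  proof (rule ccontr)
    assume "r \<noteq> 0"
    then have "finite {u. poly r u = 0}" by (rule poly_roots_finite)
    moreover have "UNIV \<subseteq> {u. poly r u = 0} \<union> {u. poly Dp u = 0}" using that by auto
    ultimately have "finite (UNIV :: complex set)" using fin by (meson finite_UnI finite_subset)
    then show False using infinite_UNIV_char_0 by blast
  qed
  have "r1 = 0" by (rule zero) (use both in blast)
  moreover have "r0 = 0" by (rule zero) (use both in blast)
  ultimately have "R = 0" using Rform r0_def r1_def by simp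
  then show ?thesis using PQR by simp
qed




lemma cheb_eval:
  fixes w y :: complex
  assumes "w*y = 1"
  shows "poly (cheb n) ((w+y)/2) = (w^n + y^n)/2"
proof (induction n rule: cheb.induct)
  case 1 then show ?case by simp
next
  case 2 then show ?case by simp
next
  case (3 n)
  have e: "poly (cheb (Suc (Suc n))) x = 2*x*poly (cheb (Suc n)) x - poly (cheb n) x" for x
    by simp
  have "poly (cheb (Suc (Suc n))) ((w+y)/2) = 2*((w+y)/2) * ((w^Suc n + y^Suc n)/2) - (w^n + y^n)/2"
    unfolding e 3 ..
  also have "\<dots> = (w+y) * ((w^Suc n + y^Suc n)/2) - (w^n + y^n)/2" by simp
  also have "\<dots> = (w^Suc (Suc n) + y^Suc (Suc n) + (w*y - 1)*(w^n+y^n))/2"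
    by (simp add: field_simps power_Suc)
  also have "\<dots> = (w^Suc (Suc n) + y^Suc (Suc n))/2" using assms by simp
  finally show ?case .
qed

lemma degree_cheb: "degree (cheb n) = n"
proof (induction n rule: cheb.induct)
  case (3 n)
  have d1: "degree ([:0, 2:] * cheb (Suc n)) = Suc (Suc n)"
  proof -
    have "cheb (Suc n) \<noteq> 0" using 3 by (metis degree_0 nat.simps(3))
    then show ?thesis using 3 by (subst degree_mult_eq) auto
  qed
  have "degree ([:0, 2:] * cheb (Suc n) - cheb n) = Suc (Suc n)"
    using d1 3 unfolding diff_conv_add_uminus by (subst degree_add_eq_left) auto
  then show ?case by simp
qed auto

lemma key_id:
  fixes S C u v w y l l' :: complex
  assumes "w*y = 1" "w + y = 2*S*u" "l*l' = 1" "l + l' = 2*C" "C^2+S^2 = 1"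
  shows "(S*v - (w*l + y*l')/2) * (S*v - (w*l' + y*l)/2) = S^2 * (u^2 + v^2 - 2*C*u*v - 1)"
  using assms by algebra




lemma suff:
  fixes k m :: nat and q :: complex
  assumes k: "0 < 2*k" "2*k < m" and q: "q = 2 + 2*complex_of_real (cos (2*real k*pi/real m))"
  defines "J \<equiv> pcompose (cheb m) [:0, complex_of_real (sin (2*real k*pi/real m)):]"
  shows "degree J = m" and "u^2 + v^2 - (q-2)*u*v - 1 = 0 \<Longrightarrow> poly J u = poly J v"
proof -
  define th where "th = 2*real k*pi/real m"
  have m0: "real m > 0" using k by simp
  have th0: "0 < th" using k m0 by (simp add: th_def)
  have thpi: "th < pi"
  proof -
    have "2*real k < real m" using k by linarith
    then have "2*real k*pi < real m * pi" by simp
    then show ?thesis using m0 by (simp add: th_def divide_less_eq mult.commute)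
  qed
  have sin0: "sin th > 0" using th0 thpi by (simp add: sin_gt_zero)
  define S where "S = complex_of_real (sin th)"
  define C where "C = complex_of_real (cos th)"
  have S0: "S \<noteq> 0" using sin0 by (simp add: S_def)
  have J: "J = pcompose (cheb m) [:0, S:]" by (simp add: J_def S_def th_def)
  show "degree J = m" using S0 by (simp add: J degree_pcompose degree_cheb)
  have polyJ: "poly J x = poly (cheb m) (S*x)" for x by (simp add: J poly_pcompose mult.commute)
  assume K: "u^2 + v^2 - (q-2)*u*v - 1 = 0"
  have q2: "q - 2 = 2*C" by (simp add: q C_def th_def)
  define l where "l = cis th"
  define l' where "l' = cis (-th)"
  have ll: "l*l' = 1" by (simp add: l_def l'_def cis_mult)
  have lsum: "l + l' = 2*C" by (simp add: l_def l'_def C_def complex_eq_iff)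
  have mth: "real m * th = 2*pi*real k" using m0 by (simp add: th_def)
  have lm: "l^m = 1" unfolding l_def DeMoivre mth by simp
  have lm': "l'^m = 1"
  proof -
    have "real m * (-th) = 2*pi*(- real k)" using mth by simp
    moreover have "- real k \<in> \<int>" by simp
    ultimately show ?thesis unfolding l'_def DeMoivre by (metis cis_multiple_2pi)
  qed
  have CS: "C^2 + S^2 = 1"
  proof -
    have "C^2 + S^2 = complex_of_real ((cos th)^2 + (sin th)^2)"
      by (simp only: C_def S_def of_real_power of_real_add)
    then show ?thesis by simp
  qed
  define z where "z = csqrt (S^2*u^2 - 1)"
  define w where "w = S*u + z"
  define y where "y = S*u - z"
  have wy: "w*y = 1" unfolding w_def y_def
  proof -
    have "(S*u + z)*(S*u - z) = S^2*u^2 - z^2" by (simp add: algebra_simps power2_eq_square)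
    then show "(S*u + z)*(S*u - z) = 1" by (simp add: z_def)
  qed
  have wys: "w + y = 2*S*u" by (simp add: w_def y_def)
  have prod: "(S*v - (w*l + y*l')/2) * (S*v - (w*l' + y*l)/2) = 0"
    using key_id[OF wy wys ll lsum CS, of v] K q2 by (simp add: mult.assoc)
  have Su: "S*u = (w+y)/2" using wys by simp
  have pu: "poly J u = (w^m + y^m)/2" by (simp add: polyJ Su cheb_eval[OF wy])
  show "poly J u = poly J v"
  proof (cases "S*v = (w*l + y*l')/2")
    case True
    have "(w*l)*(y*l') = 1" using wy ll by (simp add: algebra_simps; metis mult.assoc mult_1)
    then have "poly J v = ((w*l)^m + (y*l')^m)/2" by (simp add: polyJ True cheb_eval)
    also have "\<dots> = (w^m + y^m)/2" by (simp add: power_mult_distrib lm lm')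
    finally show ?thesis using pu by (metis)
  next
    case False
    then have T: "S*v = (w*l' + y*l)/2" using prod by simp
    have "(w*l')*(y*l) = 1" using wy ll by (simp add: algebra_simps; metis mult.assoc mult_1)
    then have "poly J v = ((w*l')^m + (y*l)^m)/2" by (simp add: polyJ T cheb_eval)
    also have "\<dots> = (w^m + y^m)/2" by (simp add: power_mult_distrib lm lm')
    finally show ?thesis using pu by (metis)
  qed
qed




lemma cos_shift_int: "cos (x + 2*pi*of_int j) = cos x"
  by (simp add: cos_add)

lemma rou:
  fixes l l' :: complex
  assumes ln: "l^n = 1" and n: "n > 0" and ll: "l*l' = 1" and l1: "l \<noteq> 1" and lm1: "l \<noteq> -1"
  shows "\<exists>k m::nat. 0 < 2*k \<and> 2*k < m \<and> l + l' = 2*complex_of_real (cos (2*real k*pi/real m))"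
proof -
  have l0: "l \<noteq> 0" using ll by auto
  have "norm l ^ n = 1 ^ n" using ln by (metis norm_one norm_power power_one)
  then have nl: "norm l = 1" using n by (subst (asm) power_eq_iff_eq_base) auto
  define t where "t = Arg l"
  have lc: "l = cis t" using cis_Arg[OF l0] nl by (simp add: t_def sgn_eq)
  have l'c: "l' = cis (-t)"
  proof -
    have "l' = inverse l" using inverse_unique[OF ll] by simp
    then show ?thesis by (simp add: lc)
  qed
  have sum: "l + l' = 2*complex_of_real (cos t)" by (simp add: lc l'c complex_eq_iff)
  have "cis (real n * t) = 1" using ln lc DeMoivre by metis
  then have "cos (real n * t) = 1" by (metis cis.sel(1) one_complex.sel(1))
  then obtain j :: int where j: "real n * t = of_int j * 2 * pi" by (auto simp: cos_one_2pi_int)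
  define j' where "j' = j mod int n"
  define d where "d = j div int n"
  have j'r: "0 \<le> j'" "j' < int n" using n by (auto simp: j'_def)
  have jd: "j = int n * d + j'" by (simp add: j'_def d_def)
  have tt: "t = 2*pi*of_int j'/real n + 2*pi*of_int d"
  proof -
    have "t = of_int j * 2 * pi / real n" using j n by (simp add: field_simps)
    also have "\<dots> = 2*pi*of_int j'/real n + 2*pi*of_int d" using n
      by (simp add: jd field_simps)
    finally show ?thesis .
  qed
  have ct: "cos t = cos (2*pi*of_int j'/real n)" unfolding tt by (rule cos_shift_int)
  define k0 where "k0 = nat j'"
  have k0r: "real k0 = of_int j'" using j'r by (simp add: k0_def)
  have ct2: "cos t = cos (2*real k0*pi/real n)" unfolding ct k0r by (simp add: mult.commute mult.left_commute)
  have k0n: "k0 < n" using j'r by (simp add: k0_def)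
  have alg1: "l = 1" if "l + l' = 2" 
  proof -
    have "(l - 1)^2 = l*(l+l') - 2*l" using ll by (simp add: algebra_simps power2_eq_square)
    then have "(l-1)^2 = 0" using that by simp
    then show ?thesis by simp
  qed
  have alg2: "l = -1" if "l + l' = -2" 
  proof -
    have "(l + 1)^2 = l*(l+l') + 2*l" using ll by (simp add: algebra_simps power2_eq_square)
    then have "(l+1)^2 = 0" using that by simp
    then show ?thesis by (simp add: add_eq_0_iff equation_minus_iff)
  qed
  have k00: "k0 \<noteq> 0"
  proof
    assume "k0 = 0" then have "l + l' = 2" using sum ct2 by simp
    then show False using alg1 l1 by blast
  qed
  have k0h: "2*k0 \<noteq> n"
  proof
    assume h: "2*k0 = n"
    have "2*real k0*pi/real n = pi" using n by (simp add: h[symmetric])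
    then have "l + l' = -2" using sum ct2 by simp
    then show False using alg2 lm1 by blast
  qed
  show ?thesis
  proof (cases "2*k0 < n")
    case True
    then show ?thesis using k00 sum ct2 by (intro exI[of _ k0] exI[of _ n]) auto
  next
    case False
    then have lt: "2*(n-k0) < n" "0 < 2*(n-k0)" using k0h k0n by auto
    have "2*real (n-k0)*pi/real n = 2*pi - 2*real k0*pi/real n" using n k0n
      by (simp add: of_nat_diff field_simps)
    then have "cos (2*real (n-k0)*pi/real n) = cos (2*real k0*pi/real n)" by simp
    then show ?thesis using lt sum ct2 by (intro exI[of _ "n-k0"] exI[of _ n]) auto
  qed
qed




lemma const_contra:
  fixes J :: "complex poly" and f :: "nat \<Rightarrow> complex"
  assumes "degree J > 0" "inj_on f S" "infinite S" "\<And>n. n \<in> S \<Longrightarrow> poly J (f n) = a"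
  shows False
proof -
  define p where "p = J - [:a:]"
  have p0: "p \<noteq> 0"
  proof
    assume "p = 0" then have "J = [:a:]" by (simp add: p_def)
    then show False using assms(1) by simp
  qed
  have "f ` S \<subseteq> {x. poly p x = 0}" using assms(4) by (auto simp: p_def)
  then have "finite (f ` S)" using poly_roots_finite[OF p0] finite_subset by blast
  then show False using assms(2,3) finite_image_iff by blast
qed

lemma chain:
  fixes J :: "complex poly" and f :: "nat \<Rightarrow> complex"
  assumes V: "\<forall>u v. u^2 + v^2 - (q-2)*u*v - 1 = 0 \<longrightarrow> poly J u = poly J v"
    and K: "\<And>n. (f n)^2 + (f (Suc n))^2 - (q-2)*f n*f (Suc n) - 1 = 0"
  shows "poly J (f n) = poly J (f 0)"
proof (induction n)
  case (Suc n) then show ?case using V K[of n] by metis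
qed simp

lemma orbit_K:
  fixes l l' x x' B :: complex
  assumes "l*l' = 1" "x*x' = 1" "B*(l-l')^2 = -1"
  shows "(x+B*x')^2 + (l*x+B*(l'*x'))^2 - (l+l')*(x+B*x')*(l*x+B*(l'*x')) - 1 = 0"
  using assms by algebra

lemma pow_ne:
  fixes l :: complex
  assumes "\<And>d. 0 < d \<Longrightarrow> d < M \<Longrightarrow> l^d \<noteq> 1" "l \<noteq> 0" "a \<noteq> b" "a < M" "b < M"
  shows "l^a \<noteq> l^b"
proof
  assume e: "l^a = l^b"
  have "l^(a-b) = 1" if "b < a" "l^a = l^b" for a b
  proof -
    have "l^a = l^(a-b) * l^b" using that by (simp flip: power_add)
    then show ?thesis using that assms(2) by simp
  qed
  then show False using assms e
    by (metis diff_less_mono linorder_neqE_nat zero_less_diff diff_le_self le_less_trans)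
qed




lemma aux_deg:
  fixes X l N :: complex
  assumes "X*X = 1" "l*l = 1"
  shows "(N*X)^2 + ((1+N)*(l*X))^2 - 2*l*(N*X)*((1+N)*(l*X)) = 1"
  using assms by algebra

lemma aux_inj:
  fixes X Y X' Y' B :: complex
  assumes "X*X' = 1" "Y*Y' = 1" "X + B*X' = Y + B*Y'"
  shows "(X - Y)*(X*Y - B) = 0"
  using assms by algebra

lemma nec:
  fixes J :: "complex poly" and q :: complex
  assumes V: "\<forall>u v. u^2 + v^2 - (q-2)*u*v - 1 = 0 \<longrightarrow> poly J u = poly J v"
    and dJ: "degree J > 0"
  shows "\<exists>k m::nat. 0 < 2*k \<and> 2*k < m \<and> q = 2 + 2*complex_of_real (cos (2*real k*pi/real m))"
proof -
  define c where "c = (q-2)/2"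
  define z where "z = csqrt (c^2 - 1)"
  define l where "l = c + z"
  define l' where "l' = c - z"
  have ll: "l*l' = 1"
  proof -
    have "l*l' = c^2 - z^2" by (simp add: l_def l'_def algebra_simps power2_eq_square)
    then show ?thesis by (simp add: z_def)
  qed
  have lsum: "q - 2 = l + l'" by (simp add: l_def l'_def c_def)
  have l0: "l \<noteq> 0" using ll by auto
  show ?thesis
  proof (cases "l = 1 \<or> l = -1")
    case True
    have l2: "l*l = 1" using True by auto
    have l'l: "l' = l" using ll l2 by (metis mult.assoc mult_1 mult.commute)
    define f where "f n = of_nat n * l^n" for n
    have K: "(f n)^2 + (f (Suc n))^2 - (q-2)*f n*f (Suc n) - 1 = 0" for n
    proof -
      have X: "l^n * l^n = 1" using l2 by (metis power_mult_distrib power_one)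
      show ?thesis unfolding f_def lsum l'l using aux_deg[OF X l2] by (simp add: power_Suc)
    qed
    have nl: "norm l = 1" using True by auto
    have nf: "norm (f n) = real n" for n by (simp add: f_def norm_mult norm_power nl)
    have inj: "inj_on f UNIV"
      by (rule inj_onI) (metis nf of_nat_eq_iff)
    show ?thesis
      using const_contra[OF dJ inj infinite_UNIV_nat, of "poly J (f 0)"] chain[of q J f, OF V K] by blast
  next
    case False
    then have l1: "l \<noteq> 1" and lm1: "l \<noteq> -1" by auto
    show ?thesis
    proof (cases "\<exists>n>0. l^n = 1")
      case True
      then obtain n where "n > 0" "l^n = 1" by blast
      from rou[OF this(2) this(1) ll l1 lm1] obtain k m :: nat where
        "0 < 2*k" "2*k < m" "l + l' = 2*complex_of_real (cos (2*real k*pi/real m))" by blast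
      then show ?thesis using lsum by (intro exI[of _ k] exI[of _ m]) (auto simp: algebra_simps)
    next
      case False
      then have nr: "\<And>d. 0 < d \<Longrightarrow> l^d \<noteq> 1" by blast
      have lnl': "l - l' \<noteq> 0"
      proof
        assume "l - l' = 0"
        then have "l*l = 1" using ll by simp
        then have "(l - 1)*(l + 1) = 0" by (simp add: algebra_simps)
        then show False using l1 lm1 by (simp add: add_eq_0_iff equation_minus_iff)
      qed
      define B where "B = -1/(l-l')^2"
      have B: "B*(l-l')^2 = -1" using lnl' by (simp add: B_def)
      define f where "f n = l^n + B*l'^n" for n
      have K: "(f n)^2 + (f (Suc n))^2 - (q-2)*f n*f (Suc n) - 1 = 0" for n
      proof -
        have X: "l^n * l'^n = 1" using ll by (metis power_mult_distrib power_one)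
        show ?thesis unfolding f_def lsum power_Suc using orbit_K[OF ll X B] .
      qed
      define N where "N = (if \<exists>j. l^j = B then (SOME j. l^j = B) else 0)"
      have NB: "\<And>j. l^j = B \<Longrightarrow> l^N = B"
        unfolding N_def by (metis (mono_tags, lifting) someI_ex)
      have inj: "inj_on f {N<..}"
      proof (rule inj_onI, rule ccontr)
        fix a b assume a: "a \<in> {N<..}" and b: "b \<in> {N<..}" and e: "f a = f b" and ab: "a \<noteq> b"
        have ne: "l^a \<noteq> l^b" using pow_ne[of "Suc (max a b)" l a b] nr l0 ab by auto
        have Xa: "l^a * l'^a = 1" and Xb: "l^b * l'^b = 1" using ll by (metis power_mult_distrib power_one)+
        have ee: "l^a + B*l'^a = l^b + B*l'^b" using e by (simp add: f_def)
        have "(l^a - l^b)*(l^a*l^b - B) = 0" using aux_inj[OF Xa Xb ee] .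
        then have "l^(a+b) = B" using ne by (simp add: power_add)
        then have "l^(a+b) = l^N" using NB[of "a+b"] by simp
        moreover have "a + b > N" using a b by auto
        ultimately have "l^(a+b-N) = 1"
        proof -
          assume h: "l^(a+b) = l^N" "a + b > N"
          have "l^(a+b) = l^(a+b-N) * l^N" using h(2) by (simp flip: power_add)
          then show ?thesis using h(1) l0 by simp
        qed
        then show False using nr \<open>a + b > N\<close> by simp
      qed
      show ?thesis
        using const_contra[OF dJ inj infinite_Ioi, of "poly J (f 0)"] chain[of q J f, OF V K] by blast
    qed
  qed
qed




lemma V_of_dvd:
  assumes "Kpoly q dvd Jdiff J"
  shows "\<forall>u v. u^2 + v^2 - (q-2)*u*v - 1 = 0 \<longrightarrow> poly J u = poly J v"
  using dvd_vanish[OF assms] by (simp add: eval2_Jdiff)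

lemma dvd_of_V:
  assumes "\<And>u v. u^2 + v^2 - (q-2)*u*v - 1 = 0 \<Longrightarrow> poly J u = poly J v"
  shows "Kpoly q dvd Jdiff J"
  by (rule vanish_dvd) (simp add: eval2_Jdiff assms)

lemma minimal:
  fixes k m :: nat and J :: "complex poly" and q :: complex
  assumes k: "0 < 2*k" "2*k < m" and cop: "coprime k m"
    and q: "q = 2 + 2*complex_of_real (cos (2*real k*pi/real m))"
    and V: "\<forall>u v. u^2 + v^2 - (q-2)*u*v - 1 = 0 \<longrightarrow> poly J u = poly J v"
    and dJ: "degree J > 0"
  shows "m \<le> degree J"
proof -
  define th where "th = 2*real k*pi/real m"
  have m0: "real m > 0" using k by simp
  have th0: "0 < th" using k m0 by (simp add: th_def)
  have thpi: "th < pi"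
  proof -
    have "2*real k < real m" using k by linarith
    then have "2*real k*pi < real m * pi" by simp
    then show ?thesis using m0 by (simp add: th_def divide_less_eq mult.commute)
  qed
  have sin0: "sin th > 0" using th0 thpi by (simp add: sin_gt_zero)
  define l where "l = cis th"
  define l' where "l' = cis (-th)"
  have ll: "l*l' = 1" by (simp add: l_def l'_def cis_mult)
  have lsum: "q - 2 = l + l'" by (simp add: l_def l'_def q th_def complex_eq_iff)
  have l0: "l \<noteq> 0" by (simp add: l_def)
  have nl: "norm l = 1" by (simp add: l_def)
  have lnl': "l - l' \<noteq> 0"
  proof
    assume "l - l' = 0"
    then have "Im l = Im l'" by simp
    then show False using sin0 by (simp add: l_def l'_def)
  qed
  define B where "B = -1/(l-l')^2"
  have B: "B*(l-l')^2 = -1" using lnl' by (simp add: B_def)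
  define t where "t = complex_of_real (norm B + 1)"
  have t0: "t \<noteq> 0" unfolding t_def
    by (metis add_nonneg_pos norm_ge_zero of_real_eq_0_iff zero_less_one less_irrefl)
  define x where "x n = t*l^n" for n
  define x' where "x' n = l'^n/t" for n
  define f where "f n = x n + B * x' n" for n
  have K: "(f n)^2 + (f (Suc n))^2 - (q-2)*f n*f (Suc n) - 1 = 0" for n
  proof -
    have X: "x n * x' n = 1" using ll t0
      by (simp add: x_def x'_def) (metis power_mult_distrib power_one)
    have fS: "f (Suc n) = l * x n + B * (l' * x' n)" by (simp add: f_def x_def x'_def)
    have fn: "f n = x n + B * x' n" by (simp add: f_def)
    show ?thesis unfolding fS unfolding fn lsum using orbit_K[OF ll X B] .
  qed
  have prim: "l^d \<noteq> 1" if d: "0 < d" "d < m" for d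
  proof
    assume "l^d = 1"
    then have "cis (real d * th) = 1" by (simp add: l_def DeMoivre)
    then have "cos (real d * th) = 1" by (metis cis.sel(1) one_complex.sel(1))
    then obtain j :: int where j: "real d * th = of_int j * 2 * pi" by (auto simp: cos_one_2pi_int)
    then have "real d * real k = of_int j * real m" using m0 by (simp add: th_def field_simps)
    then have "int d * int k = j * int m"
      by (metis of_int_eq_iff of_int_mult of_int_of_nat_eq)
    then have "int m dvd int (d*k)" by simp
    then have "m dvd d*k" by (simp only: of_nat_dvd_iff)
    then have "m dvd d" using cop by (simp add: coprime_commute coprime_dvd_mult_left_iff)
    then show False using d by (simp add: nat_dvd_not_less)
  qed
  have inj: "inj_on f {..<m}"
  proof (rule inj_onI, rule ccontr)
    fix a b assume a: "a \<in> {..<m}" and b: "b \<in> {..<m}" and e: "f a = f b" and ab: "a \<noteq> b"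
    have ne: "l^a \<noteq> l^b" using pow_ne[of m l a b] prim l0 ab a b by auto
    have Xa: "l^a * l'^a = 1" and Xb: "l^b * l'^b = 1" using ll by (metis power_mult_distrib power_one)+
    define B2 where "B2 = B/(t*t)"
    have fx: "f n = t * (l^n + B2 * l'^n)" for n using t0
      by (simp add: f_def x_def x'_def B2_def field_simps)
    have ee: "l^a + B2*l'^a = l^b + B2*l'^b" using e t0 by (simp add: fx)
    have "(l^a - l^b)*(l^a*l^b - B2) = 0" using aux_inj[OF Xa Xb ee] .
    then have "l^a*l^b = B2" using ne by simp
    then have "norm B2 = 1" by (metis nl norm_mult norm_power power_one mult_1)
    then have "norm B = (norm B + 1)^2"
      by (simp add: B2_def t_def norm_divide norm_mult power2_eq_square)
    moreover have "norm B < (norm B + 1)^2"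
      by (simp add: power2_eq_square algebra_simps) (smt (verit) norm_ge_zero mult_nonneg_nonneg)
    ultimately show False by simp
  qed
  define p where "p = J - [:poly J (f 0):]"
  have p0: "p \<noteq> 0"
  proof
    assume "p = 0" then have "J = [:poly J (f 0):]" by (simp add: p_def)
    then show False using dJ by (metis degree_pCons_0 less_irrefl)
  qed
  have sub: "f ` {..<m} \<subseteq> {x. poly p x = 0}"
    using chain[of q J f, OF V K] by (auto simp: p_def)
  have "m = card (f ` {..<m})" using card_image[OF inj] by simp
  also have "\<dots> \<le> card {x. poly p x = 0}" by (rule card_mono[OF poly_roots_finite[OF p0] sub])
  also have "\<dots> \<le> degree p" by (rule card_poly_roots_bound[OF p0])
  also have "\<dots> \<le> degree J" unfolding p_def by (rule degree_diff_le) auto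
  finally show ?thesis .
qed

theorem proposition5p1:
  fixes q :: complex
  shows "((\<exists>J :: complex poly. degree J > 0 \<and> Kpoly q dvd Jdiff J) \<longleftrightarrow>
           (\<exists>k m :: nat. 0 < 2 * k \<and> 2 * k < m \<and>
              q = 2 + 2 * complex_of_real (cos (2 * real k * pi / real m))))
       \<and> (\<forall>k m :: nat. 0 < 2 * k \<and> 2 * k < m \<and> coprime k m \<and>
              q = 2 + 2 * complex_of_real (cos (2 * real k * pi / real m)) \<longrightarrow>
            (let J = pcompose (cheb m) [:0, complex_of_real (sin (2 * real k * pi / real m)):]
             in degree J > 0 \<and> Kpoly q dvd Jdiff J \<and> degree J = m \<and>
                (\<forall>J' :: complex poly. degree J' > 0 \<and> Kpoly q dvd Jdiff J' \<longrightarrow> m \<le> degree J')))"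
proof (intro conjI iffI allI impI)
  assume "\<exists>J :: complex poly. degree J > 0 \<and> Kpoly q dvd Jdiff J"
  then obtain J :: "complex poly" where "degree J > 0" "Kpoly q dvd Jdiff J" by blast
  then show "\<exists>k m :: nat. 0 < 2 * k \<and> 2 * k < m \<and>
              q = 2 + 2 * complex_of_real (cos (2 * real k * pi / real m))"
    using nec V_of_dvd by blast
next
  assume "\<exists>k m :: nat. 0 < 2 * k \<and> 2 * k < m \<and>
              q = 2 + 2 * complex_of_real (cos (2 * real k * pi / real m))"
  then obtain k m :: nat where h: "0 < 2 * k" "2 * k < m"
    "q = 2 + 2 * complex_of_real (cos (2 * real k * pi / real m))" by blast
  define J where "J = pcompose (cheb m) [:0, complex_of_real (sin (2 * real k * pi / real m)):]"
  have "degree J = m" using suff(1)[OF h] by (simp add: J_def)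
  moreover have "Kpoly q dvd Jdiff J" using suff(2)[OF h] by (intro dvd_of_V) (simp add: J_def)
  ultimately show "\<exists>J :: complex poly. degree J > 0 \<and> Kpoly q dvd Jdiff J"
    using h(1,2) by (intro exI[of _ J]) simp
next
  fix k m :: nat
  assume "0 < 2 * k \<and> 2 * k < m \<and> coprime k m \<and>
              q = 2 + 2 * complex_of_real (cos (2 * real k * pi / real m))"
  then have h: "0 < 2 * k" "2 * k < m" "coprime k m"
    "q = 2 + 2 * complex_of_real (cos (2 * real k * pi / real m))" by auto
  define J where "J = pcompose (cheb m) [:0, complex_of_real (sin (2 * real k * pi / real m)):]"
  have d: "degree J = m" using suff(1)[OF h(1,2,4)] by (simp add: J_def)
  have dv: "Kpoly q dvd Jdiff J" using suff(2)[OF h(1,2,4)] by (intro dvd_of_V) (simp add: J_def)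
  have mn: "\<forall>J' :: complex poly. degree J' > 0 \<and> Kpoly q dvd Jdiff J' \<longrightarrow> m \<le> degree J'"
    using minimal[OF h] V_of_dvd by blast
  show "let J = pcompose (cheb m) [:0, complex_of_real (sin (2 * real k * pi / real m)):]
             in degree J > 0 \<and> Kpoly q dvd Jdiff J \<and> degree J = m \<and>
                (\<forall>J' :: complex poly. degree J' > 0 \<and> Kpoly q dvd Jdiff J' \<longrightarrow> m \<le> degree J')"
    unfolding Let_def J_def[symmetric] using d dv mn h by auto
qed


end
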